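(* Under the setting described in the context, let $j\in J$ and let $u_j$ be an exact eigenfunction associated with $\lambda_i$. Assume $\Lambda_p\neq\lambda_i$ for all $p\notin J$. Let $W=\Pi_h u_j-\mathcal{P}_{a_h^\ell}u_j$, $\beta_p=m_h^\ell(W,U_p^\ell)$ for $p\notin J$, and $Z=\sum_{p\notin J}\frac{\lambda_i}{\Lambda_p-\lambda_i}\beta_pU_p^\ell$. Then $$\|W\|^2_{m_h^\ell}=m_h^\ell(u_j-\Pi_hu_j,Z)+(m-m_h^\ell)(u_j,Z)+\frac{1}{\lambda_i}(a_h^\ell-a)(u_j,Z),$$ $$\|W\|^2_{a_h^\ell}=\lambda_i\,m_h^\ell(u_j-\Pi_hu_j,W)+\lambda_i\|W\|^2_{m_h^\ell}+\lambda_i(m-m_h^\ell)(u_j,W)+(a_h^\ell-a)(u_j,W).$$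
   Context: Let $d\in\{2,3\}$ and $\Omega\subset\mathbb{R}^d$ a nonempty bounded connected open set with smooth boundary $\Gamma=\partial\Omega$; fix integers $r\ge1$, $k\ge1$; $\Omega$ is at least $C^{r+2}$ and $C^{k+1}$ regular. $H^1(\Omega,\Gamma)=\{u\in H^1(\Omega):u|_\Gamma\in H^1(\Gamma)\}$; $\nabla_\Gamma$ is the tangential gradient; $b(x)=x-\mathrm{d}(x)\nabla\mathrm{d}(x)$, $\mathrm{d}$ the signed distance to $\Gamma$, is the orthogonal projection onto $\Gamma$ near $\Gamma$. Continuous problem: $a(u,v)=\int_\Omega\nabla u\cdot\nabla v\,dx+\int_\Gamma\nabla_\Gamma u\cdot\nabla_\Gamma v\,ds+\int_\Gamma uv\,ds$, $m(u,v)=\int_\Omega uv\,dx$; eigenpairs $(\lambda_n,u_n)$, $a(u_n,v)=\lambda_n m(u_n,v)$ for all $v\in H^1(\Omega,\Gamma)$, eigenvalues increasing with multiplicity, $(u_n)$ $m$-orthonormal. Fix $\lambda_i$ of multiplicity $N$, $J=\{i,\dots,i+N-1\}$, $\lambda_j=\lambda_i$ for $j\in J$. Meshes and lift: $\mathcal{T}_h^{(1)}$ quasi-uniform simplicial meshes of size $h$ with boundary vertices on $\Gamma$, $T=F_T(\hat T)$ with $F_T$ affine. For $T$ with at least two vertices on $\Gamma$ (barycentric coordinates $\lambda_l$, vertices $\hat v_l$ of $\hat T$, $\varepsilon_l=1$ iff $F_T(\hat v_l)\in\Gamma$, $\lambda^*=\sum\varepsilon_l\lambda_l$, $\hat\sigma=\{\lambda^*=0\}$,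 $\hat y=\frac1{\lambda^*}\sum\varepsilon_l\lambda_l\hat v_l$): $F_T^{(e)}=F_T$ on $\hat\sigma$, $F_T^{(e)}(\hat x)=F_T(\hat x)+(\lambda^* )^{r+2}(b(F_T(\hat y))-F_T(\hat y))$ otherwise; else $F_T^{(e)}=F_T$. $F_T^{(r)}$ is the $\mathbb{P}^r$-Lagrange interpolant of $F_T^{(e)}$, $T^{(r)}=F_T^{(r)}(\hat T)$, $\Omega_h=\bigcup T^{(r)}$, $\Gamma_h=\partial\Omega_h$. $G_h:\Omega_h\to\Omega$ equals $F^{(e)}_{T^{(r)}}\circ(F_T^{(r)})^{-1}$ on $T^{(r)}$ (formula of $F_T^{(e)}$ with $F_T$ replaced by $F_T^{(r)}$); continuous, elementwise $C^1$-diffeomorphism, $G_h|_{\Gamma_h}=b$. Lift: $v^\ell\circ G_h=v$. Discrete: $\mathbb{V}_h=\{\chi\in C^0(\Omega_h):\chi|_{T^{(r)}}\circ F_T^{(r)}\in\mathbb{P}^k(\hat T)\}$, $\mathbb{V}_h^\ell$ its lifts; $a_h(U,V)=\int_{\Omega_h}\nabla U\cdot\nabla V+\int_{\Gamma_h}\nabla_{\Gamma_h}U\cdot\nabla_{\Gamma_h}V+\int_{\Gamma_h}UV$, $m_h(U,V)=\int_{\Omega_h}UV$; for $v,w\in H^1(\Omega,\Gamma)$, $a_h^\ell(v,w)=a_h(v\circ G_h,w\circ G_h)$, $m_h^\ell(v,w)=m_h(v\circ G_h,w\circ G_h)$, norms $\|v\|_{a_h^\ell}=a_h^\ell(v,v)^{1/2}$,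 $\|v\|_{m_h^\ell}=m_h^\ell(v,v)^{1/2}$. Discrete eigenpairs $(\Lambda_p,U_p)$, $p=1,\dots,\dim\mathbb{V}_h$: $a_h(U_p,V)=\Lambda_pm_h(U_p,V)$ for all $V\in\mathbb{V}_h$, $(U_p)$ $m_h$-orthonormal basis of $\mathbb{V}_h$. $\mathbb{F}_h^\ell=\mathrm{span}\{U_j^\ell:j\in J\}$. Projections on $H^1(\Omega,\Gamma)$: $\Pi_h v\in\mathbb{V}_h^\ell$ with $a_h^\ell(\Pi_hv,w)=a_h^\ell(v,w)$ for all $w\in\mathbb{V}_h^\ell$; $\mathcal{P}_{a_h^\ell}v\in\mathbb{F}_h^\ell$ with $a_h^\ell(\mathcal{P}_{a_h^\ell}v,w)=a_h^\ell(v,w)$ for all $w\in\mathbb{F}_h^\ell$; $\mathcal{P}_{m_h^\ell}v\in\mathbb{F}_h^\ell$ with $m_h^\ell(\mathcal{P}_{m_h^\ell}v,w)=m_h^\ell(v,w)$ for all $w\in\mathbb{F}_h^\ell$. *)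

theory Defs
  imports "HOL-Analysis.Analysis"
begin

text \<open>The type 'v plays the role of H^1(Omega,Gamma); the lifted
discrete space V_h^l is a finite-dimensional subspace of it, so every function
below is already lifted.\<close>

definition sym_form :: "('v \<Rightarrow> 'v \<Rightarrow> real) \<Rightarrow> bool" where
  "sym_form B \<longleftrightarrow> (\<forall>x y. B x y = B y x)"

definition pos_def_form :: "('v::zero \<Rightarrow> 'v \<Rightarrow> real) \<Rightarrow> bool" where
  "pos_def_form B \<longleftrightarrow> (\<forall>x. x \<noteq> 0 \<longrightarrow> B x x > 0)"

end

theory Submission
  imports Defs
begin

lemma bil_sum_r:
  assumes "bilinear B"
  shows "B x (\<Sum>p\<in>A. c p *\<^sub>R v p) = (\<Sum>p\<in>A. c p * B x (v p))"
proof (cases "finite A")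
  case True then show ?thesis
    by (induct A rule: finite_induct) (auto simp: bilinear_radd[OF assms] bilinear_rmul[OF assms] bilinear_rzero[OF assms])
next
  case False then show ?thesis by (simp add: bilinear_rzero[OF assms])
qed

lemma bil_lin_l: "bilinear B \<Longrightarrow> linear (\<lambda>x. B x y)"
  by (simp add: bilinear_def)

lemma bil_lin_r: "bilinear B \<Longrightarrow> linear (\<lambda>y. B x y)"
  by (simp add: bilinear_def)

lemma expand_on:
  fixes mh :: "'v::real_vector \<Rightarrow> 'v \<Rightarrow> real"
  assumes B: "bilinear mh" and fin: "finite A"
    and orth: "\<And>p q. p \<in> A \<Longrightarrow> q \<in> A \<Longrightarrow> mh (U p) (U q) = (if p = q then 1 else 0)"
    and w: "w \<in> span (U ` A)"
  shows "w = (\<Sum>p\<in>A. mh w (U p) *\<^sub>R U p)"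
proof -
  have lg: "linear (\<lambda>w. \<Sum>p\<in>A. mh w (U p) *\<^sub>R U p)"
    by (rule linearI) (simp_all add: bilinear_ladd[OF B] bilinear_lmul[OF B] scaleR_add_left
        sum.distrib scaleR_sum_right)
  have "id w = (\<lambda>w. \<Sum>p\<in>A. mh w (U p) *\<^sub>R U p) w"
  proof (rule linear_eq_on_span[OF linear_id lg _ w])
    fix x assume "x \<in> U ` A"
    then obtain q where q: "q \<in> A" "x = U q" by auto
    have "(\<Sum>p\<in>A. mh (U q) (U p) *\<^sub>R U p) = (\<Sum>p\<in>A. if q = p then U p else 0)"
      by (rule sum.cong) (auto simp: orth q)
    also have "\<dots> = U q" using q fin by simp
    finally show "id x = (\<Sum>p\<in>A. mh x (U p) *\<^sub>R U p)" using q by simp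
  qed
  then show ?thesis by simp
qed


theorem mainTheorem4:
  fixes a m ah mh :: "'v::real_vector \<Rightarrow> 'v \<Rightarrow> real"
    and lam :: "nat \<Rightarrow> real" and u :: "nat \<Rightarrow> 'v"
    and Vh :: "'v set" and D :: nat and Lam :: "nat \<Rightarrow> real" and U :: "nat \<Rightarrow> 'v"
    and i N j :: nat and Piu Pu :: 'v
  assumes forms: "bilinear a" "bilinear m" "bilinear ah" "bilinear mh"
    and syms: "sym_form a" "sym_form m" "sym_form ah" "sym_form mh"
    and posdef: "pos_def_form a" "pos_def_form m" "pos_def_form ah" "pos_def_form mh"
    \<comment> \<open>continuous eigenpairs (indexed from 1), increasing, m-orthonormal\<close>
    and cont_eig: "\<And>n v. n \<ge> 1 \<Longrightarrow> a (u n) v = lam n * m (u n) v"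
    and cont_orth: "\<And>n n'. n \<ge> 1 \<Longrightarrow> n' \<ge> 1 \<Longrightarrow> m (u n) (u n') = (if n = n' then 1 else 0)"
    and cont_mono: "\<And>n n'. 1 \<le> n \<Longrightarrow> n \<le> n' \<Longrightarrow> lam n \<le> lam n'"
    \<comment> \<open>lam i has multiplicity N, J = {i..i+N-1}\<close>
    and iN: "i \<ge> 1" "N \<ge> 1"
    and mult: "\<And>n. n \<in> {i..i+N-1} \<Longrightarrow> lam n = lam i"
    and mult_lo: "i > 1 \<Longrightarrow> lam (i - 1) < lam i"
    and mult_hi: "lam (i + N) > lam i"
    \<comment> \<open>discrete (lifted) space and discrete eigenpairs, p = 1..dim V_h\<close>
    and Vh_sub: "subspace Vh"
    and Vh_dim: "dim Vh = D"
    and U_in: "\<And>p. p \<in> {1..D} \<Longrightarrow> U p \<in> Vh"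
    and U_span: "span (U ` {1..D}) = Vh"
    and disc_orth: "\<And>p q. p \<in> {1..D} \<Longrightarrow> q \<in> {1..D} \<Longrightarrow> mh (U p) (U q) = (if p = q then 1 else 0)"
    and disc_eig: "\<And>p V. p \<in> {1..D} \<Longrightarrow> V \<in> Vh \<Longrightarrow> ah (U p) V = Lam p * mh (U p) V"
    and disc_mono: "\<And>p q. p \<in> {1..D} \<Longrightarrow> q \<in> {1..D} \<Longrightarrow> p \<le> q \<Longrightarrow> Lam p \<le> Lam q"
    and J_sub: "{i..i+N-1} \<subseteq> {1..D}"
    \<comment> \<open>hypotheses of the theorem\<close>
    and jJ: "j \<in> {i..i+N-1}"
    and sep: "\<And>p. p \<in> {1..D} - {i..i+N-1} \<Longrightarrow> Lam p \<noteq> lam i"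
    \<comment> \<open>Piu = Pi_h u_j and Pu = P_{a_h^l} u_j\<close>
    and Piu: "Piu \<in> Vh" "\<And>w. w \<in> Vh \<Longrightarrow> ah Piu w = ah (u j) w"
    and Pu: "Pu \<in> span (U ` {i..i+N-1})"
            "\<And>w. w \<in> span (U ` {i..i+N-1}) \<Longrightarrow> ah Pu w = ah (u j) w"
  shows "let W = Piu - Pu;
             \<beta> = (\<lambda>p. mh W (U p));
             Z = (\<Sum>p\<in>{1..D} - {i..i+N-1}. (lam i / (Lam p - lam i) * \<beta> p) *\<^sub>R U p)
         in mh W W = mh (u j - Piu) Z + (m (u j) Z - mh (u j) Z) + (1 / lam i) * (ah (u j) Z - a (u j) Z)
          \<and> ah W W = lam i * mh (u j - Piu) W + lam i * mh W W
                     + lam i * (m (u j) W - mh (u j) W) + (ah (u j) W - a (u j) W)"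
proof -
  define J where "J = {i..i+N-1}"
  define K where "K = {1..D} - J"
  define lm where "lm = lam i"
  define uj where "uj = u j"
  define W where "W = Piu - Pu"
  define \<beta> where "\<beta> = (\<lambda>p. mh W (U p))"
  define c where "c = (\<lambda>p. lm / (Lam p - lm) * \<beta> p)"
  define Z where "Z = (\<Sum>p\<in>K. c p *\<^sub>R U p)"
  note fa = forms(1) and fm = forms(2) and fah = forms(3) and fmh = forms(4)
  have symah: "\<And>x y. ah x y = ah y x" and symmh: "\<And>x y. mh x y = mh y x"
    using syms unfolding sym_form_def by auto
  have j1: "j \<ge> 1" using jJ iN by auto
  have lamj: "lam j = lm" using mult[OF jJ] lm_def by simp
  have eigu: "\<And>v. a uj v = lm * m uj v" using cont_eig[OF j1] lamj uj_def by simp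
  have lmpos: "lm > 0"
  proof -
    have "m uj uj = 1" using cont_orth[OF j1 j1] uj_def by simp
    then have "uj \<noteq> 0" using bilinear_lzero[OF fm] by auto
    then have "a uj uj > 0" using posdef(1) unfolding pos_def_form_def by auto
    then show ?thesis using eigu[of uj] \<open>m uj uj = 1\<close> by simp
  qed
  have finD: "finite {1..D}" by simp
  have JD: "J \<subseteq> {1..D}" using J_sub J_def by simp
  have spanJ: "span (U ` J) \<subseteq> Vh" using U_span span_mono[of "U ` J" "U ` {1..D}"] JD by auto
  have PuV: "Pu \<in> Vh" using Pu(1) spanJ J_def by auto
  have WV: "W \<in> Vh" using Piu(1) PuV Vh_sub W_def by (simp add: subspace_diff)
  have ZV: "Z \<in> Vh" unfolding Z_def
    by (rule subspace_sum[OF Vh_sub]) (use U_in K_def in \<open>auto intro: subspace_scale[OF Vh_sub]\<close>)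
  have Lampos: "\<And>q. q \<in> {1..D} \<Longrightarrow> Lam q > 0"
  proof -
    fix q assume q: "q \<in> {1..D}"
    have "mh (U q) (U q) = 1" using disc_orth[OF q q] by simp
    then have "U q \<noteq> 0" using bilinear_lzero[OF fmh] by auto
    then have "ah (U q) (U q) > 0" using posdef(3) unfolding pos_def_form_def by auto
    then show "Lam q > 0" using disc_eig[OF q U_in[OF q]] \<open>mh (U q) (U q) = 1\<close> by simp
  qed
  have ahWJ: "\<And>q. q \<in> J \<Longrightarrow> ah W (U q) = 0"
  proof -
    fix q assume q: "q \<in> J"
    have qD: "q \<in> {1..D}" using q JD by auto
    have "U q \<in> span (U ` J)" using q by (simp add: span_base)
    then have "ah Pu (U q) = ah uj (U q)" using Pu(2) J_def uj_def by simp
    moreover have "ah Piu (U q) = ah uj (U q)" using Piu(2) U_in[OF qD] uj_def by simp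
    ultimately show "ah W (U q) = 0" unfolding W_def by (simp add: bilinear_lsub[OF fah])
  qed
  have mhWJ: "\<And>q. q \<in> J \<Longrightarrow> \<beta> q = 0"
  proof -
    fix q assume q: "q \<in> J"
    have qD: "q \<in> {1..D}" using q JD by auto
    have "0 = ah (U q) W" using ahWJ[OF q] symah by simp
    also have "\<dots> = Lam q * mh (U q) W" using disc_eig[OF qD WV] .
    finally show "\<beta> q = 0" using Lampos[OF qD] symmh \<beta>_def by simp
  qed
  have ahPuW: "ah Pu W = 0"
    by (rule linear_eq_0_on_span[OF bil_lin_l[OF fah] _ Pu(1)[folded J_def]])
       (use ahWJ symah in auto)
  have mhPuW: "mh Pu W = 0"
    by (rule linear_eq_0_on_span[OF bil_lin_l[OF fmh] _ Pu(1)[folded J_def]])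
       (use mhWJ symmh \<beta>_def in auto)
  have mhJZ: "\<And>q. q \<in> J \<Longrightarrow> mh (U q) Z = 0"
  proof -
    fix q assume q: "q \<in> J"
    have qD: "q \<in> {1..D}" using q JD by auto
    have "mh (U q) Z = (\<Sum>p\<in>K. c p * mh (U q) (U p))" unfolding Z_def by (rule bil_sum_r[OF fmh])
    also have "\<dots> = 0" by (rule sum.neutral) (use q qD K_def disc_orth in auto)
    finally show "mh (U q) Z = 0" .
  qed
  have mhPuZ: "mh Pu Z = 0"
    by (rule linear_eq_0_on_span[OF bil_lin_l[OF fmh] _ Pu(1)[folded J_def]])
       (use mhJZ in auto)
  have ahPuZ: "ah Pu Z = 0"
  proof (rule linear_eq_0_on_span[OF bil_lin_l[OF fah] _ Pu(1)[folded J_def]])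
    fix x assume "x \<in> U ` J"
    then obtain q where q: "q \<in> J" "x = U q" by auto
    have qD: "q \<in> {1..D}" using q JD by auto
    show "ah x Z = 0" using disc_eig[OF qD ZV] mhJZ[OF q(1)] q by simp
  qed
  have mhWZ: "mh W Z = (\<Sum>p\<in>K. c p * \<beta> p)" unfolding Z_def \<beta>_def by (rule bil_sum_r[OF fmh])
  have ahWZ: "ah W Z = (\<Sum>p\<in>K. c p * (Lam p * \<beta> p))"
  proof -
    have "ah W Z = (\<Sum>p\<in>K. c p * ah W (U p))" unfolding Z_def by (rule bil_sum_r[OF fah])
    also have "\<dots> = (\<Sum>p\<in>K. c p * (Lam p * \<beta> p))"
    proof (rule sum.cong)
      fix p assume "p \<in> K"
      then have pD: "p \<in> {1..D}" using K_def by auto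
      show "c p * ah W (U p) = c p * (Lam p * \<beta> p)"
        using disc_eig[OF pD WV] symah[of W "U p"] symmh[of W "U p"] \<beta>_def by simp
    qed simp
    finally show ?thesis .
  qed
  have WWsum: "mh W W = (\<Sum>p\<in>K. \<beta> p * \<beta> p)"
  proof -
    have Wsp: "W \<in> span (U ` {1..D})" using WV U_span by simp
    have "W = (\<Sum>p\<in>{1..D}. \<beta> p *\<^sub>R U p)"
      using expand_on[OF fmh finD _ Wsp] disc_orth \<beta>_def by auto
    then have "mh W W = mh W (\<Sum>p\<in>{1..D}. \<beta> p *\<^sub>R U p)" by simp
    also have "\<dots> = (\<Sum>p\<in>{1..D}. \<beta> p * \<beta> p)" using bil_sum_r[OF fmh] \<beta>_def by simp
    also have "\<dots> = (\<Sum>p\<in>K. \<beta> p * \<beta> p) + (\<Sum>p\<in>J. \<beta> p * \<beta> p)"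
      using sum.subset_diff[OF JD finD] K_def by simp
    also have "(\<Sum>p\<in>J. \<beta> p * \<beta> p) = 0" using mhWJ by simp
    finally show ?thesis by simp
  qed
  have key: "(\<Sum>p\<in>K. \<beta> p * \<beta> p) = (1 / lm) * ah W Z - mh W Z"
  proof -
    have "(1 / lm) * ah W Z - mh W Z = (\<Sum>p\<in>K. (1/lm) * (c p * (Lam p * \<beta> p)) - c p * \<beta> p)"
      unfolding ahWZ mhWZ by (simp add: sum_distrib_left sum_subtractf)
    also have "\<dots> = (\<Sum>p\<in>K. \<beta> p * \<beta> p)"
    proof (rule sum.cong)
      fix p assume "p \<in> K"
      then have "Lam p \<noteq> lm" using sep K_def J_def lm_def by auto
      then have "Lam p - lm \<noteq> 0" by simp
      then show "(1/lm) * (c p * (Lam p * \<beta> p)) - c p * \<beta> p = \<beta> p * \<beta> p"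
      proof -
        have lm0: "lm \<noteq> 0" using lmpos by simp
        have "(1/lm) * (c p * (Lam p * \<beta> p)) - c p * \<beta> p = (c p * (Lam p - lm)) * \<beta> p / lm"
          using lm0 by (simp add: field_simps)
        also have "c p * (Lam p - lm) = lm * \<beta> p"
          unfolding c_def using \<open>Lam p - lm \<noteq> 0\<close> by simp
        finally show ?thesis using lm0 by simp
      qed
    qed simp
    finally show ?thesis by simp
  qed
  have id1: "mh W W = mh (uj - Piu) Z + (m uj Z - mh uj Z) + (1 / lm) * (ah uj Z - a uj Z)"
  proof -
    have PiuW: "Piu = W + Pu" using W_def by simp
    have "ah uj Z = ah Piu Z" using Piu(2)[OF ZV] uj_def by simp
    also have "\<dots> = ah W Z" using PiuW ahPuZ bilinear_ladd[OF fah] by simp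
    finally have e1: "ah uj Z = ah W Z" .
    have e2: "mh Piu Z = mh W Z" using PiuW mhPuZ bilinear_ladd[OF fmh] by simp
    have e3: "(1 / lm) * (ah uj Z - a uj Z) = (1/lm) * ah W Z - m uj Z"
      using e1 eigu[of Z] lmpos by (simp add: field_simps)
    show ?thesis using e2 e3 WWsum key bilinear_lsub[OF fmh, of uj Piu Z] by simp
  qed
  have id2: "ah W W = lm * mh (uj - Piu) W + lm * mh W W
                     + lm * (m uj W - mh uj W) + (ah uj W - a uj W)"
  proof -
    have "ah W W = ah Piu W - ah Pu W" unfolding W_def by (simp add: bilinear_lsub[OF fah])
    then have e1: "ah W W = ah uj W" using Piu(2)[OF WV] ahPuW uj_def by simp
    have e2: "mh W W = mh Piu W" using mhPuW unfolding W_def by (simp add: bilinear_lsub[OF fmh] symmh)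
    show ?thesis using e1 e2 eigu[of W] bilinear_lsub[OF fmh, of uj Piu W]
      by (simp add: algebra_simps) (metis distrib_left)
  qed
  show ?thesis using id1 id2 unfolding Let_def W_def[symmetric] \<beta>_def[symmetric] c_def lm_def uj_def
    J_def K_def Z_def by (simp add: \<beta>_def)
qed

end
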